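(* Let $B\colon\mathbf{Set}\to\mathbf{Set}$ be a functor, $\Lambda$ a set and $(\tau_\lambda\colon B\mathbb{R}\to\mathbb{R})_{\lambda\in\Lambda}$ functions such that, for every set $Y$: (1) if $k\colon Y\to\mathbb{R}$ is bounded then $\tau_\lambda\circ Bk$ is bounded; (2) if $k_i\colon Y\to\mathbb{R}$ converges uniformly to $h$ then $\tau_\lambda\circ Bk_i$ converges uniformly to $\tau_\lambda\circ Bh$, for each $\lambda$. Then for every coalgebra $x\colon X\to BX$, the bisimulation uniformity of $x$ coincides with the logical uniformity of $x$, i.e. it is the coarsest uniformity on $X$ making every $[\![\varphi]\!]_x\colon X\to\mathbb{R}$ uniformly continuous.
   Context: For a family $F$ of functions $Y\to\mathbb{R}$, $\mathscr{U}(F)$ is the coarsest uniformity on $Y$ making each $f\in F$ uniformly continuous into $(\mathbb{R},\mathscr{U}_e)$, $\mathscr{U}_e$ the Euclidean uniformity. Formulas: $\varphi::=1\mid\min(\varphi_1,\varphi_2)\mid r+\varphi\mid r\times\varphi\ (r\in\mathbb{R})\mid\heartsuit_\lambda\varphi$; semantics $[\![1]\!]=1$, $\min$ pointwise, $[\![r+\varphi]\!]=r+[\![\varphi]\!]$, $[\![r\times\varphi]\!]=r[\![\varphi]\!]$, $[\![\heartsuit_\lambda\varphi]\!]_x=\tau_\lambda\circ B[\![\varphi]\!]_x\circ x$. Logical uniformity: $\mathscr{U}(\{[\![\varphi]\!]_x\})$. For a uniformity $\mathscr{U}$ on $X$, $\Phi(\mathscr{U})=\mathscr{U}(\{\tau_\lambda\circ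 Bh\circ x\mid\lambda,\ h\colon(X,\mathscr{U})\to(\mathbb{R},\mathscr{U}_e)$ uniformly continuous$\})$; uniformities are ordered by $\mathscr{U}\sqsubseteq\mathscr{V}$ iff $\mathscr{U}\supseteq\mathscr{V}$, and the bisimulation uniformity is the $\sqsubseteq$-greatest fixed point of $\Phi$. *)

theory Defs
  imports "HOL-Analysis.Analysis"
begin

definition is_uniformity :: "('a \<times> 'a) set set \<Rightarrow> bool" where
  "is_uniformity U \<longleftrightarrow>
     UNIV \<in> U \<and>
     (\<forall>E\<in>U. \<forall>F. E \<subseteq> F \<longrightarrow> F \<in> U) \<and>
     (\<forall>E\<in>U. \<forall>F\<in>U. E \<inter> F \<in> U) \<and>
     (\<forall>E\<in>U. Id \<subseteq> E) \<and>
     (\<forall>E\<in>U. E\<inverse> \<in> U) \<and>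
     (\<forall>E\<in>U. \<exists>D\<in>U. D O D \<subseteq> E)"

definition eucl_unif :: "(real \<times> real) set set" where
  "eucl_unif = {E. \<exists>\<epsilon>>0. {(r, s). dist r s < \<epsilon>} \<subseteq> E}"

definition unif_cont :: "('a \<times> 'a) set set \<Rightarrow> ('b \<times> 'b) set set \<Rightarrow> ('a \<Rightarrow> 'b) \<Rightarrow> bool" where
  "unif_cont U V f \<longleftrightarrow> (\<forall>E\<in>V. {(a, b). (f a, f b) \<in> E} \<in> U)"

definition initial_unif :: "('a \<Rightarrow> real) set \<Rightarrow> ('a \<times> 'a) set set" where
  "initial_unif F = (THE U. is_uniformity U \<and> (\<forall>f\<in>F. unif_cont U eucl_unif f) \<and>
      (\<forall>V. is_uniformity V \<and> (\<forall>f\<in>F. unif_cont V eucl_unif f) \<longrightarrow> U \<subseteq> V))"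

datatype 'l frm = FOne | FMin "'l frm" "'l frm" | FPlus real "'l frm"
  | FTimes real "'l frm" | FHeart 'l "'l frm"

text \<open>\<open>\<tau>\<close>: the family of evaluation maps \<open>B\<real> \<rightarrow> \<real>\<close> indexed by \<open>\<Lambda>\<close> (the type 'l);
  \<open>Bm\<close>: the action of the functor B on maps \<open>X \<rightarrow> \<real>\<close>; \<open>x\<close>: the coalgebra \<open>X \<rightarrow> BX\<close>.\<close>
fun sem :: "('l \<Rightarrow> 'br \<Rightarrow> real) \<Rightarrow> (('x \<Rightarrow> real) \<Rightarrow> 'bx \<Rightarrow> 'br) \<Rightarrow> ('x \<Rightarrow> 'bx)
            \<Rightarrow> 'l frm \<Rightarrow> 'x \<Rightarrow> real" where
  "sem \<tau> Bm x FOne = (\<lambda>_. 1)"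
| "sem \<tau> Bm x (FMin a b) = (\<lambda>y. min (sem \<tau> Bm x a y) (sem \<tau> Bm x b y))"
| "sem \<tau> Bm x (FPlus r a) = (\<lambda>y. r + sem \<tau> Bm x a y)"
| "sem \<tau> Bm x (FTimes r a) = (\<lambda>y. r * sem \<tau> Bm x a y)"
| "sem \<tau> Bm x (FHeart l a) = \<tau> l \<circ> Bm (sem \<tau> Bm x a) \<circ> x"

definition logical_unif :: "('l \<Rightarrow> 'br \<Rightarrow> real) \<Rightarrow> (('x \<Rightarrow> real) \<Rightarrow> 'bx \<Rightarrow> 'br) \<Rightarrow> ('x \<Rightarrow> 'bx)
            \<Rightarrow> ('x \<times> 'x) set set" where
  "logical_unif \<tau> Bm x = initial_unif (range (sem \<tau> Bm x))"

definition Phi :: "('l \<Rightarrow> 'br \<Rightarrow> real) \<Rightarrow> (('x \<Rightarrow> real) \<Rightarrow> 'bx \<Rightarrow> 'br) \<Rightarrow> ('x \<Rightarrow> 'bx)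
            \<Rightarrow> ('x \<times> 'x) set set \<Rightarrow> ('x \<times> 'x) set set" where
  "Phi \<tau> Bm x U = initial_unif {\<tau> l \<circ> Bm h \<circ> x | l h. unif_cont U eucl_unif h}"

text \<open>Greatest fixed point w.r.t. \<open>U \<sqsubseteq> V \<longleftrightarrow> U \<supseteq> V\<close>, i.e. the fixed point (among
  uniformities) contained in every other fixed point.\<close>
definition bisim_unif :: "('l \<Rightarrow> 'br \<Rightarrow> real) \<Rightarrow> (('x \<Rightarrow> real) \<Rightarrow> 'bx \<Rightarrow> 'br) \<Rightarrow> ('x \<Rightarrow> 'bx)
            \<Rightarrow> ('x \<times> 'x) set set" where
  "bisim_unif \<tau> Bm x = (THE U. is_uniformity U \<and> Phi \<tau> Bm x U = U \<and>
      (\<forall>V. is_uniformity V \<and> Phi \<tau> Bm x V = V \<longrightarrow> U \<subseteq> V))"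

end

theory Submission
  imports Defs "HOL-Library.FuncSet"
begin

definition genu :: "('a \<Rightarrow> real) set \<Rightarrow> ('a \<times> 'a) set set" where
  "genu F = {E. \<exists>G \<delta>. finite G \<and> G \<subseteq> F \<and> \<delta> > 0 \<and> {(a,b). \<forall>f\<in>G. \<bar>f a - f b\<bar> < \<delta>} \<subseteq> E}"

lemma genu_unif: "is_uniformity (genu F)"
  unfolding is_uniformity_def
proof (intro conjI ballI allI impI)
  show "UNIV \<in> genu F" unfolding genu_def by (rule CollectI, rule exI[of _ "{}"], rule exI[of _ 1]) auto
next
  fix E G assume "E \<in> genu F" "E \<subseteq> G" then show "G \<in> genu F" unfolding genu_def by blast
next
  fix E G assume "E \<in> genu F" "G \<in> genu F"
  then obtain G1 d1 G2 d2 where 1: "finite G1" "G1 \<subseteq> F" "d1 > 0" "{(a,b). \<forall>f\<in>G1. \<bar>f a - f b\<bar> < d1} \<subseteq> E"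
    and 2: "finite G2" "G2 \<subseteq> F" "d2 > 0" "{(a,b). \<forall>f\<in>G2. \<bar>f a - f b\<bar> < d2} \<subseteq> G"
    unfolding genu_def by blast
  show "E \<inter> G \<in> genu F" unfolding genu_def
    apply (rule CollectI, rule exI[of _ "G1 \<union> G2"], rule exI[of _ "min d1 d2"])
    using 1 2 by fastforce
next
  fix E assume "E \<in> genu F" then show "Id \<subseteq> E" unfolding genu_def by fastforce
next
  fix E assume "E \<in> genu F"
  then obtain G1 d1 where 1: "finite G1" "G1 \<subseteq> F" "d1 > 0" "{(a,b). \<forall>f\<in>G1. \<bar>f a - f b\<bar> < d1} \<subseteq> E"
    unfolding genu_def by blast
  show "E\<inverse> \<in> genu F" unfolding genu_def
    apply (rule CollectI, rule exI[of _ G1], rule exI[of _ d1])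
    using 1 by (fastforce simp: abs_minus_commute)
next
  fix E assume "E \<in> genu F"
  then obtain G1 d1 where 1: "finite G1" "G1 \<subseteq> F" "d1 > 0" "{(a,b). \<forall>f\<in>G1. \<bar>f a - f b\<bar> < d1} \<subseteq> E"
    unfolding genu_def by blast
  define D where "D = {(a,b). \<forall>f\<in>G1. \<bar>f a - f b\<bar> < d1/2}"
  have "D \<in> genu F" unfolding genu_def D_def using 1 by (intro CollectI exI[of _ G1] exI[of _ "d1/2"]) auto
  moreover have "D O D \<subseteq> E"
  proof
    fix p assume "p \<in> D O D"
    then obtain a b c where p: "p = (a,c)" "(a,b) \<in> D" "(b,c) \<in> D" by auto
    have "\<forall>f\<in>G1. \<bar>f a - f c\<bar> < d1"
    proof
      fix f assume "f \<in> G1"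
      then have "\<bar>f a - f b\<bar> < d1/2" "\<bar>f b - f c\<bar> < d1/2" using p D_def by auto
      then show "\<bar>f a - f c\<bar> < d1" by linarith
    qed
    then show "p \<in> E" using 1 p by auto
  qed
  ultimately show "\<exists>D\<in>genu F. D O D \<subseteq> E" by blast
qed

lemma uc_iff:
  assumes "is_uniformity U"
  shows "unif_cont U eucl_unif f \<longleftrightarrow> (\<forall>e>0. {(a,b). \<bar>f a - f b\<bar> < e} \<in> U)"
proof
  assume H: "unif_cont U eucl_unif f"
  show "\<forall>e>0. {(a,b). \<bar>f a - f b\<bar> < e} \<in> U"
  proof (intro allI impI)
    fix e :: real assume "e > 0"
    then have "{(r, s). dist r s < e} \<in> eucl_unif" unfolding eucl_unif_def by blast
    then show "{(a,b). \<bar>f a - f b\<bar> < e} \<in> U" using H unfolding unif_cont_def by (auto simp: dist_real_def)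
  qed
next
  assume H: "\<forall>e>0. {(a,b). \<bar>f a - f b\<bar> < e} \<in> U"
  show "unif_cont U eucl_unif f" unfolding unif_cont_def
  proof
    fix E assume "E \<in> eucl_unif"
    then obtain e where e: "e > 0" "{(r, s). dist r s < e} \<subseteq> E" unfolding eucl_unif_def by blast
    have "{(a,b). \<bar>f a - f b\<bar> < e} \<subseteq> {(a, b). (f a, f b) \<in> E}" using e by (auto simp: dist_real_def)
    then show "{(a, b). (f a, f b) \<in> E} \<in> U" using H e assms unfolding is_uniformity_def by blast
  qed
qed

lemma genu_uc: "f \<in> F \<Longrightarrow> unif_cont (genu F) eucl_unif f"
proof -
  assume f: "f \<in> F"
  show ?thesis unfolding uc_iff[OF genu_unif]
  proof (intro allI impI)
    fix e :: real assume "e > 0"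
    then show "{(a,b). \<bar>f a - f b\<bar> < e} \<in> genu F" unfolding genu_def using f
      by (intro CollectI exI[of _ "{f}"] exI[of _ e]) auto
  qed
qed

lemma fin_inter:
  assumes "is_uniformity V" "finite G" "\<forall>f\<in>G. {(a,b). \<bar>f a - f b\<bar> < d} \<in> V"
  shows "{(a,b). \<forall>f\<in>G. \<bar>f a - f b\<bar> < d} \<in> V"
  using assms(2,3)
proof (induction G rule: finite_induct)
  case empty
  then show ?case using assms(1) unfolding is_uniformity_def by simp
next
  case (insert g G)
  have "{(a,b). \<forall>f\<in>insert g G. \<bar>f a - f b\<bar> < d} =
        {(a,b). \<bar>g a - g b\<bar> < d} \<inter> {(a,b). \<forall>f\<in>G. \<bar>f a - f b\<bar> < d}" by auto
  then show ?case using insert assms(1) unfolding is_uniformity_def by auto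
qed

lemma genu_min:
  assumes V: "is_uniformity V" and F: "\<forall>f\<in>F. unif_cont V eucl_unif f"
  shows "genu F \<subseteq> V"
proof
  fix E assume "E \<in> genu F"
  then obtain G d where 1: "finite G" "G \<subseteq> F" "d > 0" "{(a,b). \<forall>f\<in>G. \<bar>f a - f b\<bar> < d} \<subseteq> E"
    unfolding genu_def by blast
  have "{(a,b). \<forall>f\<in>G. \<bar>f a - f b\<bar> < d} \<in> V"
    using fin_inter[OF V 1(1)] F 1(2,3) uc_iff[OF V] by blast
  then show "E \<in> V" using 1(4) V unfolding is_uniformity_def by blast
qed

lemma initial_genu: "initial_unif F = genu F"
  unfolding initial_unif_def
proof (rule the_equality)
  show "is_uniformity (genu F) \<and> (\<forall>f\<in>F. unif_cont (genu F) eucl_unif f) \<and>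
    (\<forall>V. is_uniformity V \<and> (\<forall>f\<in>F. unif_cont V eucl_unif f) \<longrightarrow> genu F \<subseteq> V)"
    using genu_unif genu_uc genu_min by blast
next
  fix U assume "is_uniformity U \<and> (\<forall>f\<in>F. unif_cont U eucl_unif f) \<and>
    (\<forall>V. is_uniformity V \<and> (\<forall>f\<in>F. unif_cont V eucl_unif f) \<longrightarrow> U \<subseteq> V)"
  then show "U = genu F" using genu_unif genu_uc genu_min by (meson subset_antisym)
qed



lemma unif_UNIV: "is_uniformity V \<Longrightarrow> UNIV \<in> V" unfolding is_uniformity_def by blast
lemma unif_mono: "is_uniformity V \<Longrightarrow> E \<in> V \<Longrightarrow> E \<subseteq> F \<Longrightarrow> F \<in> V" unfolding is_uniformity_def by blast
lemma unif_Int: "is_uniformity V \<Longrightarrow> E \<in> V \<Longrightarrow> F \<in> V \<Longrightarrow> E \<inter> F \<in> V" unfolding is_uniformity_def by blast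

lemma min_close: "\<bar>a - c\<bar> < e \<Longrightarrow> \<bar>b - d\<bar> < e \<Longrightarrow> \<bar>min a b - min c d\<bar> < (e::real)"
  by (simp add: min_def abs_less_iff)

lemma sem_uc:
  assumes V: "is_uniformity V"
    and H: "\<And>\<psi> l. unif_cont V eucl_unif (sem \<tau> Bm x \<psi>) \<Longrightarrow> unif_cont V eucl_unif (\<tau> l \<circ> Bm (sem \<tau> Bm x \<psi>) \<circ> x)"
  shows "unif_cont V eucl_unif (sem \<tau> Bm x \<phi>)"
proof (induction \<phi>)
  case FOne
  have "{(a,b). \<bar>sem \<tau> Bm x FOne a - sem \<tau> Bm x FOne b\<bar> < e} = UNIV" if "e > 0" for e :: real
    using that by auto
  moreover have "UNIV \<in> V" using unif_UNIV[OF V] .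
  ultimately show ?case unfolding uc_iff[OF V] by simp
next
  case (FMin p q)
  show ?case unfolding uc_iff[OF V]
  proof (intro allI impI)
    fix e :: real assume e: "e > 0"
    have "{(a,b). \<bar>sem \<tau> Bm x p a - sem \<tau> Bm x p b\<bar> < e} \<inter> {(a,b). \<bar>sem \<tau> Bm x q a - sem \<tau> Bm x q b\<bar> < e} \<in> V"
      using FMin e unif_Int[OF V] unfolding uc_iff[OF V] by blast
    moreover have "{(a,b). \<bar>sem \<tau> Bm x p a - sem \<tau> Bm x p b\<bar> < e} \<inter> {(a,b). \<bar>sem \<tau> Bm x q a - sem \<tau> Bm x q b\<bar> < e}
       \<subseteq> {(a,b). \<bar>sem \<tau> Bm x (FMin p q) a - sem \<tau> Bm x (FMin p q) b\<bar> < e}"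
      using min_close by fastforce
    ultimately show "{(a,b). \<bar>sem \<tau> Bm x (FMin p q) a - sem \<tau> Bm x (FMin p q) b\<bar> < e} \<in> V"
      using unif_mono[OF V] by blast
  qed
next
  case (FPlus r p)
  then show ?case unfolding uc_iff[OF V] by simp
next
  case (FTimes r p)
  show ?case unfolding uc_iff[OF V]
  proof (intro allI impI)
    fix e :: real assume e: "e > 0"
    show "{(a,b). \<bar>sem \<tau> Bm x (FTimes r p) a - sem \<tau> Bm x (FTimes r p) b\<bar> < e} \<in> V"
    proof (cases "r = 0")
      case True
      moreover have "UNIV \<in> V" using unif_UNIV[OF V] .
      ultimately show ?thesis using e by simp
    next
      case False
      then have "e / \<bar>r\<bar> > 0" using e by simp
      then have 1: "{(a,b). \<bar>sem \<tau> Bm x p a - sem \<tau> Bm x p b\<bar> < e / \<bar>r\<bar>} \<in> V"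
        using FTimes unfolding uc_iff[OF V] by blast
      have "{(a,b). \<bar>sem \<tau> Bm x p a - sem \<tau> Bm x p b\<bar> < e / \<bar>r\<bar>} \<subseteq>
            {(a,b). \<bar>sem \<tau> Bm x (FTimes r p) a - sem \<tau> Bm x (FTimes r p) b\<bar> < e}"
      proof clarsimp
        fix a b assume "\<bar>sem \<tau> Bm x p a - sem \<tau> Bm x p b\<bar> < e / \<bar>r\<bar>"
        then have "\<bar>r\<bar> * \<bar>sem \<tau> Bm x p a - sem \<tau> Bm x p b\<bar> < e" using False by (simp add: pos_less_divide_eq mult.commute)
        then show "\<bar>r * sem \<tau> Bm x p a - r * sem \<tau> Bm x p b\<bar> < e"
          by (simp add: abs_mult[symmetric] right_diff_distrib[symmetric])
      qed
      then show ?thesis using 1 unif_mono[OF V] by blast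
    qed
  qed
next
  case (FHeart l p)
  have "unif_cont V eucl_unif (\<tau> l \<circ> Bm (sem \<tau> Bm x p) \<circ> x)" using H FHeart by blast
  then show ?case by (simp add: comp_def)
qed

lemma abs_min_le: "\<bar>a\<bar> \<le> A \<Longrightarrow> \<bar>b\<bar> \<le> B \<Longrightarrow> \<bar>min a b\<bar> \<le> max A (B::real)"
  by (auto simp: min_def max_def abs_le_iff)

lemma sem_bdd:
  assumes bdd: "\<And>l k. bounded (range k) \<Longrightarrow> bounded (range (\<tau> l \<circ> Bm k))"
  shows "bounded (range (sem \<tau> Bm x \<phi>))"
proof (induction \<phi>)
  case FOne
  show ?case unfolding bounded_real by (rule exI[of _ 1]) simp
next
  case (FMin p q)
  then obtain A B where "\<forall>y. \<bar>sem \<tau> Bm x p y\<bar> \<le> A" "\<forall>y. \<bar>sem \<tau> Bm x q y\<bar> \<le> B"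
    by (auto simp: bounded_real)
  then have "\<forall>y. \<bar>sem \<tau> Bm x (FMin p q) y\<bar> \<le> max A B" using abs_min_le by simp
  then show ?case by (auto simp: bounded_real)
next
  case (FPlus r p)
  then obtain A where "\<forall>y. \<bar>sem \<tau> Bm x p y\<bar> \<le> A" by (auto simp: bounded_real)
  then have "\<forall>y. \<bar>sem \<tau> Bm x (FPlus r p) y\<bar> \<le> \<bar>r\<bar> + A"
    using abs_triangle_ineq[of r] by (metis add_left_mono order_trans sem.simps(3))
  then show ?case by (auto simp: bounded_real)
next
  case (FTimes r p)
  then obtain A where "\<forall>y. \<bar>sem \<tau> Bm x p y\<bar> \<le> A" by (auto simp: bounded_real)
  then have "\<forall>y. \<bar>sem \<tau> Bm x (FTimes r p) y\<bar> \<le> \<bar>r\<bar> * A" by (auto simp: abs_mult mult_left_mono)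
  then show ?case by (auto simp: bounded_real)
next
  case (FHeart l p)
  have "range (sem \<tau> Bm x (FHeart l p)) \<subseteq> range (\<tau> l \<circ> Bm (sem \<tau> Bm x p))" by auto
  then show ?case using bdd[OF FHeart] bounded_subset by blast
qed

definition fconst :: "real \<Rightarrow> 'l frm" where "fconst c = FTimes c FOne"
definition fmax :: "'l frm \<Rightarrow> 'l frm \<Rightarrow> 'l frm" where
  "fmax p q = FTimes (-1) (FMin (FTimes (-1) p) (FTimes (-1) q))"
definition fabsd :: "'l frm \<Rightarrow> real \<Rightarrow> 'l frm" where
  "fabsd p c = fmax (FPlus (-c) p) (FPlus c (FTimes (-1) p))"
fun fmaxb :: "'l frm \<Rightarrow> 'l frm list \<Rightarrow> 'l frm" where
  "fmaxb b [] = b" | "fmaxb b (p # ps) = fmax p (fmaxb b ps)"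

lemma sem_fconst[simp]: "sem \<tau> Bm x (fconst c) y = c" by (simp add: fconst_def)
lemma sem_fmax[simp]: "sem \<tau> Bm x (fmax p q) y = max (sem \<tau> Bm x p y) (sem \<tau> Bm x q y)"
  by (simp add: fmax_def min_def max_def)
lemma sem_fabsd[simp]: "sem \<tau> Bm x (fabsd p c) y = \<bar>sem \<tau> Bm x p y - c\<bar>"
  by (simp add: fabsd_def max_def abs_if)
lemma sem_fmaxb_le: "sem \<tau> Bm x (fmaxb b ps) y \<le> c \<longleftrightarrow> sem \<tau> Bm x b y \<le> c \<and> (\<forall>p\<in>set ps. sem \<tau> Bm x p y \<le> c)"
  by (induction ps) auto
lemma sem_fmaxb_less: "sem \<tau> Bm x (fmaxb b ps) y < c \<longleftrightarrow> sem \<tau> Bm x b y < c \<and> (\<forall>p\<in>set ps. sem \<tau> Bm x p y < c)"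
  by (induction ps) auto
lemma sem_fmaxb_ge: "sem \<tau> Bm x b y \<le> sem \<tau> Bm x (fmaxb b ps) y" "p \<in> set ps \<Longrightarrow> sem \<tau> Bm x p y \<le> sem \<tau> Bm x (fmaxb b ps) y"
  using sem_fmaxb_le[of \<tau> Bm x b ps y "sem \<tau> Bm x (fmaxb b ps) y"] by auto

lemma cover:
  fixes G :: "('x \<Rightarrow> real) set"
  assumes "finite G" "\<forall>f\<in>G. bounded (range f)" "\<delta> > 0"
  shows "\<exists>R. finite R \<and> (\<forall>y. \<exists>r\<in>R. \<forall>f\<in>G. \<bar>f y - f r\<bar> < \<delta>)"
proof -
  have "\<forall>f\<in>G. \<exists>N. \<forall>y. \<bar>f y\<bar> \<le> N" using assms(2) by (auto simp: bounded_real)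
  then obtain N where N: "\<And>f y. f \<in> G \<Longrightarrow> \<bar>f y\<bar> \<le> N f" by metis
  define \<kappa> where "\<kappa> y = restrict (\<lambda>f. \<lfloor>f y / \<delta>\<rfloor>) G" for y
  define T where "T f = {-\<lceil>N f / \<delta>\<rceil> - 1 .. \<lceil>N f / \<delta>\<rceil> + 1}" for f
  have "range \<kappa> \<subseteq> PiE G T"
  proof clarify
    fix y
    have "\<lfloor>f y / \<delta>\<rfloor> \<in> T f" if "f \<in> G" for f
    proof -
      define z where "z = f y / \<delta>"
      define w where "w = N f / \<delta>"
      have "\<bar>f y\<bar> / \<delta> \<le> N f / \<delta>" using N[OF that, of y] assms(3) by (simp add: divide_right_mono)
      then have zw: "\<bar>z\<bar> \<le> w" unfolding z_def w_def using assms(3) by (simp add: abs_divide)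
      have a: "real_of_int \<lfloor>z\<rfloor> \<le> z" "z < real_of_int \<lfloor>z\<rfloor> + 1" "w \<le> real_of_int \<lceil>w\<rceil>"
        by linarith+
      have zw2: "z \<le> w" "- w \<le> z" using zw by linarith+
      have r1: "real_of_int \<lfloor>z\<rfloor> \<le> real_of_int (\<lceil>w\<rceil> + 1)"
        unfolding of_int_add of_int_1 using a zw2 by linarith
      have r2: "real_of_int (- \<lceil>w\<rceil> - 1) \<le> real_of_int \<lfloor>z\<rfloor>"
        unfolding of_int_diff of_int_minus of_int_1 using a zw2 by linarith
      have "\<lfloor>z\<rfloor> \<le> \<lceil>w\<rceil> + 1" "- \<lceil>w\<rceil> - 1 \<le> \<lfloor>z\<rfloor>"
        using r1 r2 of_int_le_iff by blast+
      then show ?thesis unfolding T_def z_def w_def by simp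
    qed
    then show "\<kappa> y \<in> PiE G T" unfolding \<kappa>_def by auto
  qed
  moreover have "finite (PiE G T)" using assms(1) by (intro finite_PiE) (auto simp: T_def)
  ultimately have fin: "finite (range \<kappa>)" using finite_subset by blast
  define R where "R = (\<lambda>k. SOME y. \<kappa> y = k) ` range \<kappa>"
  have "finite R" using fin R_def by simp
  moreover have "\<exists>r\<in>R. \<forall>f\<in>G. \<bar>f y - f r\<bar> < \<delta>" for y
  proof -
    define r where "r = (SOME y'. \<kappa> y' = \<kappa> y)"
    have "\<kappa> r = \<kappa> y" unfolding r_def by (rule someI) auto
    have "r \<in> R" unfolding R_def r_def by auto
    moreover have "\<bar>f y - f r\<bar> < \<delta>" if f: "f \<in> G" for f
    proof -
      have "\<kappa> r f = \<kappa> y f" using \<open>\<kappa> r = \<kappa> y\<close> by simp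
      then have eq: "\<lfloor>f r / \<delta>\<rfloor> = \<lfloor>f y / \<delta>\<rfloor>" using f unfolding \<kappa>_def
        by simp
      have a: "of_int \<lfloor>f y / \<delta>\<rfloor> \<le> f y / \<delta>" "f y / \<delta> < of_int \<lfloor>f y / \<delta>\<rfloor> + 1"
        "of_int \<lfloor>f r / \<delta>\<rfloor> \<le> f r / \<delta>" "f r / \<delta> < of_int \<lfloor>f r / \<delta>\<rfloor> + 1"
        by linarith+
      have "\<bar>f y / \<delta> - f r / \<delta>\<bar> < 1"
        using a unfolding eq abs_less_iff by linarith
      then have "\<bar>(f y - f r) / \<delta>\<bar> < 1" by (simp add: diff_divide_distrib)
      then show ?thesis using assms(3) by (simp add: abs_divide)
    qed
    ultimately show ?thesis by blast
  qed
  ultimately show ?thesis by blast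
qed


lemma approx:
  fixes h :: "'x \<Rightarrow> real" and \<tau> :: "'l \<Rightarrow> 'br \<Rightarrow> real" and Bm :: "('x \<Rightarrow> real) \<Rightarrow> 'bx \<Rightarrow> 'br"
  assumes bdd: "\<And>l k. bounded (range k) \<Longrightarrow> bounded (range (\<tau> l \<circ> Bm k))"
    and uc: "unif_cont (genu (range (sem \<tau> Bm x))) eucl_unif h"
    and e: "e > 0"
  shows "\<exists>\<phi>. \<forall>y. \<bar>h y - sem \<tau> Bm x \<phi> y\<bar> \<le> e"
proof -
  let ?s = "sem \<tau> Bm x"
  have U: "\<exists>G \<delta>. finite G \<and> G \<subseteq> range ?s \<and> \<delta> > 0 \<and> (\<forall>a b. (\<forall>f\<in>G. \<bar>f a - f b\<bar> < \<delta>) \<longrightarrow> \<bar>h a - h b\<bar> < t)"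
    if t: "t > 0" for t :: real
  proof -
    have "{(a,b). \<bar>h a - h b\<bar> < t} \<in> genu (range ?s)" using uc t unfolding uc_iff[OF genu_unif] by blast
    then obtain G \<delta> where G: "finite G" "G \<subseteq> range ?s" "\<delta> > 0"
      "{(a,b). \<forall>f\<in>G. \<bar>f a - f b\<bar> < \<delta>} \<subseteq> {(a,b). \<bar>h a - h b\<bar> < t}"
      unfolding genu_def by blast
    have "\<forall>a b. (\<forall>f\<in>G. \<bar>f a - f b\<bar> < \<delta>) \<longrightarrow> \<bar>h a - h b\<bar> < t"
    proof (intro allI impI)
      fix a b assume "\<forall>f\<in>G. \<bar>f a - f b\<bar> < \<delta>"
      then have "(a, b) \<in> {(a,b). \<forall>f\<in>G. \<bar>f a - f b\<bar> < \<delta>}" by simp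
      then show "\<bar>h a - h b\<bar> < t" using G(4) by blast
    qed
    then show ?thesis using G(1-3) by blast
  qed
  have Gbdd: "\<forall>f\<in>G. bounded (range f)" if GS: "G \<subseteq> range ?s" for G
  proof
    fix f assume "f \<in> G"
    then obtain \<phi> where "f = ?s \<phi>" using GS by blast
    then show "bounded (range f)" using sem_bdd[OF bdd] by simp
  qed
  obtain H where H: "\<And>y. \<bar>h y\<bar> \<le> H" "H \<ge> 0"
  proof -
    obtain G \<delta> where G: "finite G" "G \<subseteq> range ?s" "\<delta> > 0"
      "\<forall>a b. (\<forall>f\<in>G. \<bar>f a - f b\<bar> < \<delta>) \<longrightarrow> \<bar>h a - h b\<bar> < 1"
      using U[of 1] by auto
    obtain R where R: "finite R" "\<forall>y. \<exists>r\<in>R. \<forall>f\<in>G. \<bar>f y - f r\<bar> < \<delta>"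
      using cover[OF G(1) Gbdd[OF G(2)] G(3)] by blast
    define H where "H = (\<Sum>r\<in>R. \<bar>h r\<bar>) + 1"
    have "\<bar>h y\<bar> \<le> H" for y
    proof -
      obtain r where r: "r \<in> R" "\<forall>f\<in>G. \<bar>f y - f r\<bar> < \<delta>" using R by blast
      have "\<bar>h y - h r\<bar> < 1" using G(4) r by blast
      moreover have "\<bar>h r\<bar> \<le> (\<Sum>r\<in>R. \<bar>h r\<bar>)" using member_le_sum[of r R "\<lambda>r. \<bar>h r\<bar>"] r R by simp
      ultimately show ?thesis unfolding H_def by linarith
    qed
    moreover have "H \<ge> 0" unfolding H_def by (simp add: sum_nonneg add_nonneg_nonneg)
    ultimately show thesis using that by blast
  qed
  define \<epsilon> where "\<epsilon> = e / 3"
  have \<epsilon>: "\<epsilon> > 0" using e \<epsilon>_def by simp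
  obtain G \<delta> where G: "finite G" "G \<subseteq> range ?s" "\<delta> > 0"
      "\<forall>a b. (\<forall>f\<in>G. \<bar>f a - f b\<bar> < \<delta>) \<longrightarrow> \<bar>h a - h b\<bar> < \<epsilon>"
      using U[OF \<epsilon>] by auto
  obtain \<Phi> where \<Phi>: "finite \<Phi>" "G = ?s ` \<Phi>" using finite_subset_image[OF G(1) G(2)] by blast
  obtain ps where ps: "set ps = \<Phi>" using finite_list[OF \<Phi>(1)] by blast
  define M where "M = 2 * H / \<delta>"
  have M0: "M \<ge> 0" using H(2) G(3) M_def by simp
  have M\<delta>: "M * \<delta> = 2 * H" using G(3) M_def by simp
  define \<delta>' where "\<delta>' = min \<delta> (\<epsilon> / (M + 1))"
  have \<delta>'0: "\<delta>' > 0" using G(3) \<epsilon> M0 \<delta>'_def by simp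
  have \<delta>'\<delta>: "\<delta>' \<le> \<delta>" using \<delta>'_def by simp
  have "\<delta>' \<le> \<epsilon> / (M + 1)" unfolding \<delta>'_def by simp
  then have "M * \<delta>' \<le> M * (\<epsilon> / (M + 1))" using M0 by (rule mult_left_mono)
  also have "\<dots> < \<epsilon>"
  proof -
    have M1: "M + 1 > 0" using M0 by simp
    show ?thesis unfolding times_divide_eq_right pos_divide_less_eq[OF M1] using \<epsilon> by (simp add: algebra_simps)
  qed
  finally have M\<delta>': "M * \<delta>' < \<epsilon>" .
  obtain R where R: "finite R" "\<forall>y. \<exists>r\<in>R. \<forall>f\<in>G. \<bar>f y - f r\<bar> < \<delta>'"
    using cover[OF G(1) Gbdd[OF G(2)] \<delta>'0] by blast
  define d where "d a = fmaxb (fconst 0) (map (\<lambda>p. fabsd p (?s p a)) ps)" for a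
  define c where "c a = FPlus (h a - \<epsilon>) (FTimes (-M) (d a))" for a
  have sc: "?s (c a) y = h a - \<epsilon> - M * ?s (d a) y" for a y by (simp add: c_def)
  have d0: "0 \<le> ?s (d a) y" for a y using sem_fmaxb_ge(1)[of \<tau> Bm x "fconst 0"] unfolding d_def by simp
  have d_lt: "?s (d a) y < t \<longleftrightarrow> 0 < t \<and> (\<forall>f\<in>G. \<bar>f y - f a\<bar> < t)" for a y t
    unfolding d_def sem_fmaxb_less set_map ps \<Phi>(2) by simp
  have c_le: "?s (c a) y \<le> h y" for a y
  proof (cases "?s (d a) y < \<delta>")
    case True
    then have "\<forall>f\<in>G. \<bar>f y - f a\<bar> < \<delta>" using d_lt by blast
    then have "\<bar>h y - h a\<bar> < \<epsilon>" using G(4) by blast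
    moreover have "M * ?s (d a) y \<ge> 0" using M0 d0 by simp
    ultimately show ?thesis unfolding sc by linarith
  next
    case False
    then have "M * ?s (d a) y \<ge> M * \<delta>" using M0 by (simp add: mult_left_mono)
    moreover have "h a \<le> H" "- H \<le> h y" using H(1)[of a] H(1)[of y] by linarith+
    ultimately show ?thesis unfolding sc using M\<delta> \<epsilon> by linarith
  qed
  have c_ge: "\<exists>r\<in>R. h y - e \<le> ?s (c r) y" for y
  proof -
    obtain r where r: "r \<in> R" "\<forall>f\<in>G. \<bar>f y - f r\<bar> < \<delta>'" using R by blast
    have "?s (d r) y < \<delta>'" using d_lt r \<delta>'0 by blast
    then have "M * ?s (d r) y \<le> M * \<delta>'" using M0 by (simp add: mult_left_mono)
    moreover have "\<forall>f\<in>G. \<bar>f y - f r\<bar> < \<delta>" using r(2) \<delta>'\<delta> by (meson less_le_trans)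
    then have "\<bar>h y - h r\<bar> < \<epsilon>" using G(4) by blast
    ultimately have "h y - e \<le> ?s (c r) y" unfolding sc using M\<delta>' \<epsilon>_def by linarith
    then show ?thesis using r by blast
  qed
  obtain r0 where r0: "r0 \<in> R" using c_ge by blast
  obtain rs where rs: "set rs = R" using finite_list[OF R(1)] by blast
  define \<phi> where "\<phi> = fmaxb (c r0) (map c rs)"
  have "\<bar>h y - ?s \<phi> y\<bar> \<le> e" for y
  proof -
    have "?s \<phi> y \<le> h y" unfolding \<phi>_def sem_fmaxb_le using c_le by auto
    moreover obtain r where "r \<in> R" "h y - e \<le> ?s (c r) y" using c_ge by blast
    moreover have "?s (c r) y \<le> ?s \<phi> y" unfolding \<phi>_def
      by (rule sem_fmaxb_ge(2)) (use \<open>r \<in> R\<close> rs in auto)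
    ultimately show ?thesis by linarith
  qed
  then show ?thesis by blast
qed


lemma key:
  fixes \<tau> :: "'l \<Rightarrow> 'br \<Rightarrow> real" and Bm :: "('x \<Rightarrow> real) \<Rightarrow> 'bx \<Rightarrow> 'br" and x :: "'x \<Rightarrow> 'bx"
  assumes bdd: "\<And>l k. bounded (range k) \<Longrightarrow> bounded (range (\<tau> l \<circ> Bm k))"
    and ulim: "\<And>l (k :: nat \<Rightarrow> 'x \<Rightarrow> real) h. uniform_limit UNIV k h sequentially \<Longrightarrow>
                   uniform_limit UNIV (\<lambda>i. \<tau> l \<circ> Bm (k i)) (\<tau> l \<circ> Bm h) sequentially"
    and uc: "unif_cont (genu (range (sem \<tau> Bm x))) eucl_unif h"
  shows "unif_cont (genu (range (sem \<tau> Bm x))) eucl_unif (\<tau> l \<circ> Bm h \<circ> x)"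
proof -
  let ?s = "sem \<tau> Bm x"
  let ?L = "genu (range (sem \<tau> Bm x))"
  have "\<forall>n. \<exists>\<phi>. \<forall>y. \<bar>h y - ?s \<phi> y\<bar> \<le> inverse (real (Suc n))"
    using approx[OF bdd uc] by simp
  then obtain Ph where Ph: "\<And>n y. \<bar>h y - ?s (Ph n) y\<bar> \<le> inverse (real (Suc n))" by metis
  have "uniform_limit UNIV (\<lambda>n. ?s (Ph n)) h sequentially"
    unfolding uniform_limit_iff
  proof (intro allI impI)
    fix e :: real assume e: "e > 0"
    obtain N where N: "inverse (real (Suc N)) < e" using reals_Archimedean[OF e] by blast
    show "\<forall>\<^sub>F n in sequentially. \<forall>y\<in>UNIV. dist (?s (Ph n) y) (h y) < e"
      unfolding eventually_sequentially
    proof (intro exI[of _ N] allI impI ballI)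
      fix n y assume n: "N \<le> n"
      have "inverse (real (Suc n)) \<le> inverse (real (Suc N))" using n by (simp add: le_imp_inverse_le)
      moreover have "\<bar>h y - ?s (Ph n) y\<bar> \<le> inverse (real (Suc n))" by (rule Ph)
      ultimately show "dist (?s (Ph n) y) (h y) < e" using N
        unfolding dist_real_def abs_minus_commute[of "?s (Ph n) y"] by linarith
    qed
  qed
  then have UL: "uniform_limit UNIV (\<lambda>n. \<tau> l \<circ> Bm (?s (Ph n))) (\<tau> l \<circ> Bm h) sequentially"
    by (rule ulim)
  show ?thesis unfolding uc_iff[OF genu_unif]
  proof (intro allI impI)
    fix e :: real assume e: "e > 0"
    then have e3: "e / 3 > 0" by simp
    then have "\<forall>\<^sub>F n in sequentially. \<forall>b\<in>UNIV. dist ((\<tau> l \<circ> Bm (?s (Ph n))) b) ((\<tau> l \<circ> Bm h) b) < e / 3"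
      using UL unfolding uniform_limit_iff by blast
    then obtain n where n: "\<And>b. dist (\<tau> l (Bm (?s (Ph n)) b)) (\<tau> l (Bm h b)) < e / 3"
      unfolding eventually_sequentially by auto
    define g where "g = ?s (FHeart l (Ph n))"
    have gS: "g \<in> range ?s" unfolding g_def by (rule rangeI)
    have "{(a,b). \<bar>g a - g b\<bar> < e / 3} \<in> ?L" unfolding genu_def using e3 gS
      by (intro CollectI exI[of _ "{g}"] exI[of _ "e / 3"]) auto
    moreover have "{(a,b). \<bar>g a - g b\<bar> < e / 3} \<subseteq> {(a,b). \<bar>(\<tau> l \<circ> Bm h \<circ> x) a - (\<tau> l \<circ> Bm h \<circ> x) b\<bar> < e}"
    proof clarify
      fix a b assume ab: "\<bar>g a - g b\<bar> < e / 3"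
      have "\<bar>g a - \<tau> l (Bm h (x a))\<bar> < e / 3" "\<bar>g b - \<tau> l (Bm h (x b))\<bar> < e / 3"
        using n[of "x a"] n[of "x b"] by (simp_all add: g_def dist_real_def)
      then show "\<bar>(\<tau> l \<circ> Bm h \<circ> x) a - (\<tau> l \<circ> Bm h \<circ> x) b\<bar> < e"
        using ab unfolding comp_apply abs_less_iff by linarith
    qed
    ultimately show "{(a,b). \<bar>(\<tau> l \<circ> Bm h \<circ> x) a - (\<tau> l \<circ> Bm h \<circ> x) b\<bar> < e} \<in> ?L"
      using unif_mono[OF genu_unif] by blast
  qed
qed

theorem mainTheorem13:
  fixes \<tau> :: "'l \<Rightarrow> 'br \<Rightarrow> real"
    and BXR :: "('x \<Rightarrow> real) \<Rightarrow> 'bx \<Rightarrow> 'br"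
    and BRR :: "(real \<Rightarrow> real) \<Rightarrow> 'br \<Rightarrow> 'br"
    and BXX :: "('x \<Rightarrow> 'x) \<Rightarrow> 'bx \<Rightarrow> 'bx"
    and BRX :: "(real \<Rightarrow> 'x) \<Rightarrow> 'br \<Rightarrow> 'bx"
    and x :: "'x \<Rightarrow> 'bx"
  assumes id_X: "BXX id = id" and id_R: "BRR id = id"
    and comp_XXX: "\<And>f g. BXX (g \<circ> f) = BXX g \<circ> BXX f"
    and comp_XXR: "\<And>f g. BXR (g \<circ> f) = BXR g \<circ> BXX f"
    and comp_XRX: "\<And>f g. BXX (g \<circ> f) = BRX g \<circ> BXR f"
    and comp_XRR: "\<And>f g. BXR (g \<circ> f) = BRR g \<circ> BXR f"
    and comp_RXX: "\<And>f g. BRX (g \<circ> f) = BXX g \<circ> BRX f"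
    and comp_RXR: "\<And>f g. BRR (g \<circ> f) = BXR g \<circ> BRX f"
    and comp_RRX: "\<And>f g. BRX (g \<circ> f) = BRX g \<circ> BRR f"
    and comp_RRR: "\<And>f g. BRR (g \<circ> f) = BRR g \<circ> BRR f"
    and bdd_X: "\<And>l (k :: 'x \<Rightarrow> real). bounded (range k) \<Longrightarrow> bounded (range (\<tau> l \<circ> BXR k))"
    and bdd_R: "\<And>l (k :: real \<Rightarrow> real). bounded (range k) \<Longrightarrow> bounded (range (\<tau> l \<circ> BRR k))"
    and ulim_X: "\<And>l (k :: nat \<Rightarrow> 'x \<Rightarrow> real) h. uniform_limit UNIV k h sequentially \<Longrightarrow>
                   uniform_limit UNIV (\<lambda>i. \<tau> l \<circ> BXR (k i)) (\<tau> l \<circ> BXR h) sequentially"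
    and ulim_R: "\<And>l (k :: nat \<Rightarrow> real \<Rightarrow> real) h. uniform_limit UNIV k h sequentially \<Longrightarrow>
                   uniform_limit UNIV (\<lambda>i. \<tau> l \<circ> BRR (k i)) (\<tau> l \<circ> BRR h) sequentially"
  shows "bisim_unif \<tau> BXR x = logical_unif \<tau> BXR x"
proof -
  let ?s = "sem \<tau> BXR x"
  define L where "L = genu (range ?s)"
  have unifL: "is_uniformity L" by (simp add: L_def genu_unif)
  have Phi_eq: "Phi \<tau> BXR x V = genu {\<tau> l \<circ> BXR h \<circ> x | l h. unif_cont V eucl_unif h}" for V
    by (simp add: Phi_def initial_genu)
  have fixL: "Phi \<tau> BXR x L = L"
  proof -
    let ?T = "{\<tau> l \<circ> BXR h \<circ> x | l h. unif_cont L eucl_unif h}"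
    have "genu ?T \<subseteq> L"
    proof (rule genu_min[OF unifL], safe)
      fix l h assume uh: "unif_cont L eucl_unif h"
      show "unif_cont L eucl_unif (\<tau> l \<circ> BXR h \<circ> x)"
        unfolding L_def
        apply (rule key[where \<tau>=\<tau> and Bm=BXR])
          apply (rule bdd_X, assumption)
         apply (rule ulim_X, assumption)
        using uh unfolding L_def .
    qed
    moreover have "genu (range ?s) \<subseteq> genu ?T"
    proof (rule genu_min[OF genu_unif], safe)
      fix \<phi> show "unif_cont (genu ?T) eucl_unif (?s \<phi>)"
      proof (rule sem_uc[OF genu_unif])
        fix \<psi> l assume "unif_cont (genu ?T) eucl_unif (?s \<psi>)"
        have "unif_cont L eucl_unif (?s \<psi>)" unfolding L_def by (rule genu_uc) simp
        then have "\<tau> l \<circ> BXR (?s \<psi>) \<circ> x \<in> ?T" by blast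
        then show "unif_cont (genu ?T) eucl_unif (\<tau> l \<circ> BXR (?s \<psi>) \<circ> x)" by (rule genu_uc)
      qed
    qed
    then have "L \<subseteq> genu ?T" by (simp add: L_def)
    ultimately show ?thesis using Phi_eq by auto
  qed
  have least: "L \<subseteq> V" if V: "is_uniformity V" "Phi \<tau> BXR x V = V" for V
    unfolding L_def
  proof (rule genu_min[OF V(1)], safe)
    fix \<phi> show "unif_cont V eucl_unif (?s \<phi>)"
    proof (rule sem_uc[OF V(1)])
      fix \<psi> l assume "unif_cont V eucl_unif (?s \<psi>)"
      then have "\<tau> l \<circ> BXR (?s \<psi>) \<circ> x \<in> {\<tau> l \<circ> BXR h \<circ> x | l h. unif_cont V eucl_unif h}" by blast
      then have "unif_cont (Phi \<tau> BXR x V) eucl_unif (\<tau> l \<circ> BXR (?s \<psi>) \<circ> x)"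
        unfolding Phi_eq by (rule genu_uc)
      then show "unif_cont V eucl_unif (\<tau> l \<circ> BXR (?s \<psi>) \<circ> x)" using V(2) by simp
    qed
  qed
  have "bisim_unif \<tau> BXR x = L" unfolding bisim_unif_def
  proof (rule the_equality)
    show "is_uniformity L \<and> Phi \<tau> BXR x L = L \<and> (\<forall>V. is_uniformity V \<and> Phi \<tau> BXR x V = V \<longrightarrow> L \<subseteq> V)"
      using unifL fixL least by blast
  next
    fix U assume U: "is_uniformity U \<and> Phi \<tau> BXR x U = U \<and> (\<forall>V. is_uniformity V \<and> Phi \<tau> BXR x V = V \<longrightarrow> U \<subseteq> V)"
    then have "U \<subseteq> L" using unifL fixL by blast
    moreover have "L \<subseteq> U" using U least by blast
    ultimately show "U = L" by (rule subset_antisym)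
  qed
  moreover have "logical_unif \<tau> BXR x = L" by (simp add: logical_unif_def initial_genu L_def)
  ultimately show ?thesis by simp
qed

end
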